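(* Let $\mathbb{C}$ be a locally small category and $\mathbb{C}_{\mathit{fin}}$ a full subcategory satisfying (C1)–(C5) below. Let $\mathbb{A}$ be a full subcategory of $\mathbb{C}_{\mathit{fin}}$ and let $F\in\mathrm{Ob}(\mathbb{C})$ be universal and locally finite for $\mathbb{A}$. Then for all integers $t\ge2$ and all $A\in\mathrm{Ob}(\mathbb{A})$ the following are equivalent: (1) $t_{\mathbb{A}}(A)\le t$; (2) $F\to(B)^A_{<\omega,t}$ for all $B\in\mathrm{Ob}(\mathbb{A})$ with $A\to B$; (3) for all $B\in\mathrm{Ob}(\mathbb{A})$ with $A\to B$ there is a coloring $\lambda:\hom(A,B)\to\{0,\dots,t-1\}$ which is essential at $B$.
   Context: Write $A\to B$ if $\hom(A,B)\ne\varnothing$. Conditions: (C1) all morphisms of $\mathbb{C}$ are monomorphisms; (C2) $\mathrm{Ob}(\mathbb{C}_{\mathit{fin}})$ is a set; (C3) $\hom(A,B)$ is finite for $A,B\in\mathrm{Ob}(\mathbb{C}_{\mathit{fin}})$; (C4) for every $F\in\mathrm{Ob}(\mathbb{C})$ there is $A\in\mathrm{Ob}(\mathbb{C}_{\mathit{fin}})$ with $A\to F$; (C5) for every $B\in\mathrm{Ob}(\mathbb{C}_{\mathit{fin}})$ the set $\{A\in\mathrm{Ob}(\mathbb{C}_{\mathit{fin}}):A\to B\}$ is finite. $F$ is universal for $\mathbb{A}$ if $A\to F$ for all $A\in\mathrm{Ob}(\mathbb{A})$. $F$ is locally finite for $\mathbb{A}$ if for all $A,B\in\mathrm{Ob}(\mathbb{A})$,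 $e\in\hom(A,F)$, $f\in\hom(B,F)$ there exist $D\in\mathrm{Ob}(\mathbb{A})$, $r\in\hom(D,F)$, $p\in\hom(A,D)$, $q\in\hom(B,D)$ with $r\cdot p=e$, $r\cdot q=f$, such that for every $H\in\mathrm{Ob}(\mathbb{C})$, $r'\in\hom(H,F)$, $p'\in\hom(A,H)$, $q'\in\hom(B,H)$ with $r'\cdot p'=e$, $r'\cdot q'=f$ there is $s\in\hom(D,H)$ with $r'\cdot s=r$, $s\cdot p=p'$, $s\cdot q=q'$. For objects $A,B,C$ and integers $k\ge2$, $t\ge1$: $C\to(B)^A_{k,t}$ means that for every $\chi:\hom(A,C)\to\{0,\dots,k-1\}$ there is $w\in\hom(B,C)$ with $|\chi(w\cdot\hom(A,B))|\le t$; $C\to(B)^A_{<\omega,t}$ means $C\to(B)^A_{k,t}$ for all $k\ge2$. $t_{\mathbb{A}}(A)$ is the least positive $n$ such that for all $k\ge2$ and all $B\in\mathrm{Ob}(\mathbb{A})$ there is $C\in\mathrm{Ob}(\mathbb{A})$ with $C\to(B)^A_{k,n}$, and $\infty$ otherwise. For $\chi:\hom(A,F)\to\{0,\dots,k-1\}$ and $w\in\hom(B,F)$, $\chi^{(w)}:\hom(A,B)\to\{0,\dots,k-1\}$ is $\chi^{(w)}(f)=\chi(w\cdot f)$. The kernel of a function $g$ is $\ker g=\{(x,y):g(x)=g(y)\}$. A coloring $\lambda:\hom(A,B)\to\{0,\dots,t-1\}$ is essential at $B$ (with respect to $F$) if for every $k\ge2$ and every $\chi:\hom(A,F)\to\{0,\dots,k-1\}$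 there is $w\in\hom(B,F)$ with $\ker\lambda\subseteq\ker\chi^{(w)}$. *)

theory Defs
  imports Main "HOL-Library.Extended_Nat"
begin

record ('o, 'm) category =
  Ob    :: "'o set"
  Hom   :: "'o \<Rightarrow> 'o \<Rightarrow> 'm set"
  comp  :: "'m \<Rightarrow> 'm \<Rightarrow> 'm"   (* comp C g f = g \<cdot> f  (first f, then g) *)
  ident :: "'o \<Rightarrow> 'm"

definition is_category :: "('o, 'm) category \<Rightarrow> bool" where
  "is_category C \<longleftrightarrow>
     (\<forall>X Y. (X \<notin> Ob C \<or> Y \<notin> Ob C) \<longrightarrow> Hom C X Y = {}) \<and>
     (\<forall>X\<in>Ob C. \<forall>Y\<in>Ob C. \<forall>X'\<in>Ob C. \<forall>Y'\<in>Ob C.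
        (X, Y) \<noteq> (X', Y') \<longrightarrow> Hom C X Y \<inter> Hom C X' Y' = {}) \<and>
     (\<forall>X\<in>Ob C. ident C X \<in> Hom C X X) \<and>
     (\<forall>X Y Z f g. f \<in> Hom C X Y \<longrightarrow> g \<in> Hom C Y Z \<longrightarrow> comp C g f \<in> Hom C X Z) \<and>
     (\<forall>W X Y Z f g h. f \<in> Hom C W X \<longrightarrow> g \<in> Hom C X Y \<longrightarrow> h \<in> Hom C Y Z \<longrightarrow>
        comp C h (comp C g f) = comp C (comp C h g) f) \<and>
     (\<forall>X Y f. f \<in> Hom C X Y \<longrightarrow> comp C f (ident C X) = f \<and> comp C (ident C Y) f = f)"

definition arr :: "('o, 'm) category \<Rightarrow> 'o \<Rightarrow> 'o \<Rightarrow> bool" where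
  "arr C A B \<longleftrightarrow> Hom C A B \<noteq> {}"

definition is_mono :: "('o, 'm) category \<Rightarrow> 'o \<Rightarrow> 'o \<Rightarrow> 'm \<Rightarrow> bool" where
  "is_mono C Y Z f \<longleftrightarrow> f \<in> Hom C Y Z \<and>
     (\<forall>X\<in>Ob C. \<forall>g\<in>Hom C X Y. \<forall>h\<in>Hom C X Y. comp C f g = comp C f h \<longrightarrow> g = h)"

text \<open>Conditions (C1)--(C5) for a category C and the object set Cfin of a full
  subcategory C_fin.  (C2) ``Ob(C_fin) is a set'' holds automatically in HOL.\<close>
definition C_conditions :: "('o, 'm) category \<Rightarrow> 'o set \<Rightarrow> bool" where
  "C_conditions C Cfin \<longleftrightarrow>
     (\<forall>Y\<in>Ob C. \<forall>Z\<in>Ob C. \<forall>f\<in>Hom C Y Z. is_mono C Y Z f) \<and>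
     (\<forall>A\<in>Cfin. \<forall>B\<in>Cfin. finite (Hom C A B)) \<and>
     (\<forall>F\<in>Ob C. \<exists>A\<in>Cfin. arr C A F) \<and>
     (\<forall>B\<in>Cfin. finite {A\<in>Cfin. arr C A B})"

definition universal :: "('o, 'm) category \<Rightarrow> 'o set \<Rightarrow> 'o \<Rightarrow> bool" where
  "universal C AA F \<longleftrightarrow> (\<forall>A\<in>AA. arr C A F)"

definition locally_finite :: "('o, 'm) category \<Rightarrow> 'o set \<Rightarrow> 'o \<Rightarrow> bool" where
  "locally_finite C AA F \<longleftrightarrow>
     (\<forall>A\<in>AA. \<forall>B\<in>AA. \<forall>e\<in>Hom C A F. \<forall>f\<in>Hom C B F.
       \<exists>D\<in>AA. \<exists>r\<in>Hom C D F. \<exists>p\<in>Hom C A D. \<exists>q\<in>Hom C B D.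
         comp C r p = e \<and> comp C r q = f \<and>
         (\<forall>H\<in>Ob C. \<forall>r'\<in>Hom C H F. \<forall>p'\<in>Hom C A H. \<forall>q'\<in>Hom C B H.
            comp C r' p' = e \<longrightarrow> comp C r' q' = f \<longrightarrow>
            (\<exists>s\<in>Hom C D H. comp C r' s = r \<and> comp C s p = p' \<and> comp C s q = q')))"

text \<open>Colorings \<chi> : hom(A,C) \<rightarrow> {0,...,k-1} are functions 'm \<Rightarrow> nat whose values on
  hom(A,C) lie below k (values outside hom(A,C) are irrelevant).\<close>
definition coloring :: "('o, 'm) category \<Rightarrow> 'o \<Rightarrow> 'o \<Rightarrow> nat \<Rightarrow> ('m \<Rightarrow> nat) \<Rightarrow> bool" where
  "coloring C A X k \<chi> \<longleftrightarrow> \<chi> ` Hom C A X \<subseteq> {..<k}"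

definition ramsey_arrow ::
  "('o, 'm) category \<Rightarrow> 'o \<Rightarrow> 'o \<Rightarrow> 'o \<Rightarrow> nat \<Rightarrow> nat \<Rightarrow> bool" where
  "ramsey_arrow C X B A k t \<longleftrightarrow>
     (\<forall>\<chi>. coloring C A X k \<chi> \<longrightarrow>
        (\<exists>w\<in>Hom C B X. card (\<chi> ` ((\<lambda>f. comp C w f) ` Hom C A B)) \<le> t))"

definition ramsey_arrow_fin ::
  "('o, 'm) category \<Rightarrow> 'o \<Rightarrow> 'o \<Rightarrow> 'o \<Rightarrow> nat \<Rightarrow> bool" where
  "ramsey_arrow_fin C X B A t \<longleftrightarrow> (\<forall>k\<ge>2. ramsey_arrow C X B A k t)"

definition small_ramsey_degree :: "('o, 'm) category \<Rightarrow> 'o set \<Rightarrow> 'o \<Rightarrow> enat" where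
  "small_ramsey_degree C AA A =
     (let P = (\<lambda>n::nat. 0 < n \<and> (\<forall>k\<ge>2. \<forall>B\<in>AA. \<exists>X\<in>AA. ramsey_arrow C X B A k n))
      in if \<exists>n. P n then enat (LEAST n. P n) else \<infinity>)"

definition kernel_on :: "'a set \<Rightarrow> ('a \<Rightarrow> 'b) \<Rightarrow> ('a \<times> 'a) set" where
  "kernel_on S g = {(x, y). x \<in> S \<and> y \<in> S \<and> g x = g y}"

definition essential ::
  "('o, 'm) category \<Rightarrow> 'o \<Rightarrow> 'o \<Rightarrow> 'o \<Rightarrow> ('m \<Rightarrow> nat) \<Rightarrow> bool" where
  "essential C F A B lam \<longleftrightarrow>
     (\<forall>k\<ge>2. \<forall>\<chi>. coloring C A F k \<chi> \<longrightarrow>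
        (\<exists>w\<in>Hom C B F. kernel_on (Hom C A B) lam
                          \<subseteq> kernel_on (Hom C A B) (\<lambda>f. \<chi> (comp C w f))))"

end

theory Submission
  imports Defs "HOL-Analysis.Analysis"
begin

lemma cat_comp:
  "is_category C \<Longrightarrow> f \<in> Hom C X Y \<Longrightarrow> g \<in> Hom C Y Z \<Longrightarrow> comp C g f \<in> Hom C X Z"
  unfolding is_category_def by blast

lemma cat_assoc:
  "is_category C \<Longrightarrow> f \<in> Hom C W X \<Longrightarrow> g \<in> Hom C X Y \<Longrightarrow> h \<in> Hom C Y Z \<Longrightarrow>
   comp C h (comp C g f) = comp C (comp C h g) f"
  unfolding is_category_def by blast

lemma cat_id: "is_category C \<Longrightarrow> X \<in> Ob C \<Longrightarrow> ident C X \<in> Hom C X X"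
  unfolding is_category_def by blast

lemma hom_ob: "is_category C \<Longrightarrow> f \<in> Hom C X Y \<Longrightarrow> X \<in> Ob C \<and> Y \<in> Ob C"
  unfolding is_category_def by (metis empty_iff)

lemma transfer_arrow:
  assumes cat: "is_category C" and R: "ramsey_arrow C X B A k n" and u: "u \<in> Hom C X F"
  shows "ramsey_arrow C F B A k n"
  unfolding ramsey_arrow_def
proof (intro allI impI)
  fix chi assume col: "coloring C A F k chi"
  define chi' where "chi' f = chi (comp C u f)" for f
  have "coloring C A X k chi'"
    using col cat_comp[OF cat _ u] unfolding coloring_def chi'_def by blast
  then obtain w where w: "w \<in> Hom C B X" and c: "card (chi' ` ((\<lambda>f. comp C w f) ` Hom C A B)) \<le> n"
    using R unfolding ramsey_arrow_def by blast
  have "chi ` ((\<lambda>f. comp C (comp C u w) f) ` Hom C A B) = chi' ` ((\<lambda>f. comp C w f) ` Hom C A B)"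
    unfolding image_image chi'_def
    by (rule image_cong[OF refl]) (metis cat cat_assoc u w)
  then show "\<exists>w\<in>Hom C B F. card (chi ` ((\<lambda>f. comp C w f) ` Hom C A B)) \<le> n"
    using c cat_comp[OF cat w u] by metis
qed

lemma kernel_card:
  assumes "finite S" "kernel_on S l \<subseteq> kernel_on S g"
  shows "card (g ` S) \<le> card (l ` S)"
proof -
  define h where "h y = g (SOME x. x \<in> S \<and> l x = y)" for y
  have "g ` S = h ` (l ` S)"
  proof -
    have "g x = h (l x)" if "x \<in> S" for x
    proof -
      have ex: "\<exists>x'. x' \<in> S \<and> l x' = l x" using that by blast
      define x' where "x' = (SOME x'. x' \<in> S \<and> l x' = l x)"
      have "x' \<in> S \<and> l x' = l x" unfolding x'_def by (rule someI_ex[OF ex])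
      then have "(x, x') \<in> kernel_on S l" using that by (auto simp: kernel_on_def)
      then have "g x = g x'" using assms(2) by (auto simp: kernel_on_def)
      then show ?thesis unfolding h_def x'_def by simp
    qed
    then show ?thesis by (auto simp: image_image)
  qed
  then show ?thesis using assms(1) by (simp add: card_image_le)
qed

lemma three_to_two:
  assumes ess: "essential C F A B lam" and col: "coloring C A B t lam"
    and fin: "finite (Hom C A B)" and k: "k \<ge> 2"
  shows "ramsey_arrow C F B A k t"
  unfolding ramsey_arrow_def
proof (intro allI impI)
  fix chi assume "coloring C A F k chi"
  then obtain w where w: "w \<in> Hom C B F"
    and ker: "kernel_on (Hom C A B) lam \<subseteq> kernel_on (Hom C A B) (\<lambda>f. chi (comp C w f))"
    using ess k unfolding essential_def by blast
  have "card (chi ` ((\<lambda>f. comp C w f) ` Hom C A B)) = card ((\<lambda>f. chi (comp C w f)) ` Hom C A B)"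
    by (simp add: image_image)
  also have "\<dots> \<le> card (lam ` Hom C A B)" by (rule kernel_card[OF fin ker])
  also have "\<dots> \<le> card {..<t}" using col unfolding coloring_def by (intro card_mono) auto
  finally show "\<exists>w\<in>Hom C B F. card (chi ` ((\<lambda>f. comp C w f) ` Hom C A B)) \<le> t"
    using w by auto
qed

lemma closed_cyl:
  fixes K :: "'b set" and I J :: "'a set"
  assumes finJ: "finite J" and JI: "J \<subseteq> I" and finK: "finite K"
  shows "closedin (product_topology (\<lambda>_. discrete_topology K) I)
           {x \<in> topspace (product_topology (\<lambda>_. discrete_topology K) I). P (restrict x J)}"
proof -
  define T where "T = product_topology (\<lambda>_. discrete_topology K) I"
  define Cyl where "Cyl g = {x \<in> topspace T. \<forall>j\<in>J. x j = g j}" for g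
  have eq: "{x \<in> topspace T. P (restrict x J)} = \<Union> (Cyl ` {g \<in> PiE J (\<lambda>_. K). P g})"
  proof (intro equalityI subsetI)
    fix x assume x: "x \<in> {x \<in> topspace T. P (restrict x J)}"
    then have "restrict x J \<in> PiE J (\<lambda>_. K)" using JI by (auto simp: T_def PiE_iff)
    moreover have "x \<in> Cyl (restrict x J)" using x by (auto simp: Cyl_def)
    ultimately show "x \<in> \<Union> (Cyl ` {g \<in> PiE J (\<lambda>_. K). P g})" using x by blast
  next
    fix x assume "x \<in> \<Union> (Cyl ` {g \<in> PiE J (\<lambda>_. K). P g})"
    then obtain g where g: "g \<in> PiE J (\<lambda>_. K)" "P g" and xc: "x \<in> Cyl g" by blast
    have "restrict x J = g"
      using g(1) xc by (auto simp: Cyl_def PiE_iff extensional_def restrict_def)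
    then show "x \<in> {x \<in> topspace T. P (restrict x J)}" using xc g by (auto simp: Cyl_def)
  qed
  have cc: "closedin T (Cyl g)" if "g \<in> PiE J (\<lambda>_. K)" for g
  proof (cases "J = {}")
    case True
    then show ?thesis by (simp add: Cyl_def)
  next
    case False
    have "Cyl g = \<Inter> ((\<lambda>j. {x \<in> topspace T. x j \<in> {g j}}) ` J)"
      using False by (auto simp: Cyl_def)
    moreover have "closedin T {x \<in> topspace T. x j \<in> {g j}}" if "j \<in> J" for j
      unfolding T_def
      by (rule closedin_continuous_map_preimage[OF continuous_map_product_projection])
        (use that JI \<open>g \<in> PiE J (\<lambda>_. K)\<close> in auto)
    ultimately show ?thesis using False by (auto intro!: closedin_Inter)
  qed
  have "closedin T (\<Union> (Cyl ` {g \<in> PiE J (\<lambda>_. K). P g}))"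
  proof (rule closedin_Union)
    have "finite (PiE J (\<lambda>_. K))" using finJ finK by (simp add: finite_PiE)
    then show "finite (Cyl ` {g \<in> PiE J (\<lambda>_. K). P g})" by simp
  qed (use cc in auto)
  then show ?thesis using eq unfolding T_def by simp
qed

lemma compactness:
  assumes cat: "is_category C" and CfO: "Cfin \<subseteq> Ob C" and cc: "C_conditions C Cfin"
    and AAC: "AA \<subseteq> Cfin" and Fo: "F \<in> Ob C" and univ: "universal C AA F"
    and lf: "locally_finite C AA F"
    and A: "A \<in> AA" and B: "B \<in> AA" and k: "k \<ge> 2" and RF: "ramsey_arrow C F B A k t"
  shows "\<exists>X\<in>AA. ramsey_arrow C X B A k t"
proof (rule ccontr)
  assume nX: "\<not> ?thesis"
  have bad: "\<exists>chi. coloring C A X k chi \<and>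
     (\<forall>w\<in>Hom C B X. t < card (chi ` ((\<lambda>f. comp C w f) ` Hom C A B)))" if "X \<in> AA" for X
    using nX that unfolding ramsey_arrow_def by (auto simp: not_le)
  have mono_all: "\<forall>Y\<in>Ob C. \<forall>Z\<in>Ob C. \<forall>f\<in>Hom C Y Z. is_mono C Y Z f"
    and fin_hom: "\<forall>A\<in>Cfin. \<forall>B\<in>Cfin. finite (Hom C A B)"
    using cc unfolding C_conditions_def by blast+
  have Ao: "A \<in> Ob C" using A AAC CfO by blast
  obtain e where e: "e \<in> Hom C A F" using univ A unfolding universal_def arr_def by blast
  define I where "I = Hom C A F"
  define T where "T = product_topology (\<lambda>_. discrete_topology {..<k}) I"
  define Bad where "Bad D r = {chi \<in> topspace T. \<forall>w\<in>Hom C B D.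
      t < card (chi ` ((\<lambda>f. comp C r (comp C w f)) ` Hom C A B))}" for D r
  define U where "U = (\<lambda>(D,r). Bad D r) ` (SIGMA D:AA. Hom C D F)"
  have compact: "compact_space T" unfolding T_def
    by (simp add: compact_space_product_topology compact_space_discrete_topology)
  have closed: "closedin T (Bad D r)" if D: "D \<in> AA" and r: "r \<in> Hom C D F" for D r
  proof -
    let ?J = "(\<lambda>h. comp C r h) ` Hom C A D"
    have fin: "finite ?J" using fin_hom A D AAC by blast
    have sub: "?J \<subseteq> I" unfolding I_def using cat_comp[OF cat _ r] by blast
    define Q where "Q g = (\<forall>w\<in>Hom C B D.
       t < card (g ` ((\<lambda>f. comp C r (comp C w f)) ` Hom C A B)))" for g :: "'b \<Rightarrow> nat"
    have "Bad D r = {chi \<in> topspace T. Q (restrict chi ?J)}"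
    proof -
      have "(restrict chi ?J) ` ((\<lambda>f. comp C r (comp C w f)) ` Hom C A B)
          = chi ` ((\<lambda>f. comp C r (comp C w f)) ` Hom C A B)" if w: "w \<in> Hom C B D" for chi w
      proof -
        have "comp C r (comp C w f) \<in> ?J" if "f \<in> Hom C A B" for f
          using cat_comp[OF cat that w] by blast
        then show ?thesis by (auto simp: image_iff)
      qed
      note eqr = this
      show ?thesis unfolding Bad_def Q_def by (simp only: eqr cong: ball_cong)
    qed
    moreover have "closedin T {chi \<in> topspace T. Q (restrict chi ?J)}"
      unfolding T_def by (rule closed_cyl[OF fin sub finite_lessThan])
    ultimately show ?thesis by simp
  qed
  have mono: "Bad D r \<subseteq> Bad D' (comp C r p)" if r: "r \<in> Hom C D F" and p: "p \<in> Hom C D' D" for D D' r p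
  proof
    fix chi assume chi: "chi \<in> Bad D r"
    have "t < card (chi ` ((\<lambda>f. comp C (comp C r p) (comp C w f)) ` Hom C A B))"
      if w: "w \<in> Hom C B D'" for w
    proof -
      have pw: "comp C p w \<in> Hom C B D" using cat_comp[OF cat w p] .
      have "(\<lambda>f. comp C (comp C r p) (comp C w f)) ` Hom C A B
          = (\<lambda>f. comp C r (comp C (comp C p w) f)) ` Hom C A B"
      proof (rule image_cong[OF refl])
        fix f assume f: "f \<in> Hom C A B"
        have wf: "comp C w f \<in> Hom C A D'" using cat_comp[OF cat f w] .
        show "comp C (comp C r p) (comp C w f) = comp C r (comp C (comp C p w) f)"
          using cat_assoc[OF cat wf p r] cat_assoc[OF cat f w p] by simp
      qed
      then show ?thesis using chi pw unfolding Bad_def by auto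
    qed
    then show "chi \<in> Bad D' (comp C r p)" using chi unfolding Bad_def by auto
  qed
  have nonempty: "Bad D r \<noteq> {}" if D: "D \<in> AA" and r: "r \<in> Hom C D F" for D r
  proof -
    obtain chi0 where col0: "coloring C A D k chi0"
      and b0: "\<forall>w\<in>Hom C B D. t < card (chi0 ` ((\<lambda>f. comp C w f) ` Hom C A B))"
      using bad[OF D] by blast
    have Do: "D \<in> Ob C" using D AAC CfO by blast
    have inj: "inj_on (\<lambda>h. comp C r h) (Hom C A D)"
    proof (rule inj_onI)
      fix g h assume "g \<in> Hom C A D" "h \<in> Hom C A D" "comp C r g = comp C r h"
      then show "g = h" using mono_all Do Fo r Ao unfolding is_mono_def by blast
    qed
    let ?J = "(\<lambda>h. comp C r h) ` Hom C A D"
    define chi where "chi = (\<lambda>g\<in>I. if g \<in> ?J then chi0 (inv_into (Hom C A D) (\<lambda>h. comp C r h) g) else 0)"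
    have "chi \<in> topspace T"
    proof -
      have "chi g < k" if "g \<in> I" for g
      proof (cases "g \<in> ?J")
        case True
        then have "inv_into (Hom C A D) (\<lambda>h. comp C r h) g \<in> Hom C A D" by (rule inv_into_into)
        then show ?thesis using True that col0 unfolding chi_def coloring_def by auto
      next
        case False
        then show ?thesis using that k unfolding chi_def by auto
      qed
      then show ?thesis unfolding T_def chi_def by (auto simp: PiE_iff)
    qed
    moreover have "t < card (chi ` ((\<lambda>f. comp C r (comp C w f)) ` Hom C A B))"
      if w: "w \<in> Hom C B D" for w
    proof -
      have "chi ` ((\<lambda>f. comp C r (comp C w f)) ` Hom C A B) = chi0 ` ((\<lambda>f. comp C w f) ` Hom C A B)"
        unfolding image_image
      proof (rule image_cong[OF refl])
        fix f assume f: "f \<in> Hom C A B"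
        have wf: "comp C w f \<in> Hom C A D" using cat_comp[OF cat f w] .
        have "comp C r (comp C w f) \<in> I" unfolding I_def using cat_comp[OF cat wf r] .
        then show "chi (comp C r (comp C w f)) = chi0 (comp C w f)"
          unfolding chi_def using wf inv_into_f_f[OF inj wf] by auto
      qed
      then show ?thesis using b0 w by simp
    qed
    ultimately have "chi \<in> Bad D r" unfolding Bad_def by blast
    then show ?thesis by blast
  qed
  have join: "finite G \<Longrightarrow> G \<subseteq> (SIGMA D:AA. Hom C D F) \<Longrightarrow>
      (\<exists>D\<in>AA. \<exists>r\<in>Hom C D F. \<forall>(D',r')\<in>G. Bad D r \<subseteq> Bad D' r')" for G
  proof (induction G rule: finite_induct)
    case empty
    then show ?case using A e by blast
  next
    case (insert x G)
    obtain D1 r1 where x: "x = (D1, r1)" by fastforce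
    have D1: "D1 \<in> AA" and r1: "r1 \<in> Hom C D1 F" using insert.prems x by auto
    obtain D r where D: "D \<in> AA" and r: "r \<in> Hom C D F" and sub: "\<forall>(D',r')\<in>G. Bad D r \<subseteq> Bad D' r'"
      using insert by auto
    obtain D2 r2 p q where D2: "D2 \<in> AA" and r2: "r2 \<in> Hom C D2 F" and p: "p \<in> Hom C D1 D2"
      and q: "q \<in> Hom C D D2" and rp: "comp C r2 p = r1" and rq: "comp C r2 q = r"
      using lf D1 D r1 r unfolding locally_finite_def by blast
    have "Bad D2 r2 \<subseteq> Bad D1 r1" using mono[OF r2 p] rp by simp
    moreover have "Bad D2 r2 \<subseteq> Bad D r" using mono[OF r2 q] rq by simp
    ultimately have "\<forall>y\<in>insert x G. case y of (D',r') \<Rightarrow> Bad D2 r2 \<subseteq> Bad D' r'"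
    proof (intro ballI)
      fix y assume b1: "Bad D2 r2 \<subseteq> Bad D1 r1" and b2: "Bad D2 r2 \<subseteq> Bad D r"
        and y: "y \<in> insert x G"
      obtain Dy ry where yy: "y = (Dy, ry)" by fastforce
      show "case y of (D',r') \<Rightarrow> Bad D2 r2 \<subseteq> Bad D' r'"
      proof (cases "y = x")
        case True then show ?thesis using b1 x by simp
      next
        case False
        then have "y \<in> G" using y by simp
        then have "Bad D r \<subseteq> Bad Dy ry" using sub yy by auto
        then show ?thesis using b2 yy by auto
      qed
    qed
    then show ?case using D2 r2 by blast
  qed
  have fip: "\<Inter>G' \<noteq> {}" if G'a: "finite G'" "G' \<subseteq> U" for G'
  proof -
    obtain G where G: "G \<subseteq> (SIGMA D:AA. Hom C D F)" "finite G" "G' = (\<lambda>(D,r). Bad D r) ` G"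
      using G'a finite_subset_image[of G' "\<lambda>(D,r). Bad D r" "SIGMA D:AA. Hom C D F"]
      unfolding U_def by blast
    obtain D r where D: "D \<in> AA" and r: "r \<in> Hom C D F" and sub: "\<forall>(D',r')\<in>G. Bad D r \<subseteq> Bad D' r'"
      using join[OF G(2,1)] by blast
    have "Bad D r \<subseteq> \<Inter>G'" using sub G(3) by auto
    then show ?thesis using nonempty[OF D r] by blast
  qed
  have "\<forall>C\<in>U. closedin T C" unfolding U_def using closed by auto
  then have "\<Inter>U \<noteq> {}" using compact fip unfolding compact_space_fip by blast
  then obtain chi where chi: "chi \<in> \<Inter>U" by blast
  have "Bad A e \<in> U" unfolding U_def using A e by force
  then have chiAe: "chi \<in> Bad A e" using chi by blast
  then have "chi \<in> topspace T" unfolding Bad_def by blast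
  then have "coloring C A F k chi" unfolding T_def I_def coloring_def by (auto simp: PiE_iff)
  then obtain w where w: "w \<in> Hom C B F" and cw: "card (chi ` ((\<lambda>f. comp C w f) ` Hom C A B)) \<le> t"
    using RF unfolding ramsey_arrow_def by blast
  obtain D r q where D: "D \<in> AA" and r: "r \<in> Hom C D F" and q: "q \<in> Hom C B D"
    and rq: "comp C r q = w"
    using lf A B e w unfolding locally_finite_def by blast
  have "Bad D r \<in> U" unfolding U_def using D r by force
  then have "chi \<in> Bad D r" using chi by blast
  then have lt: "t < card (chi ` ((\<lambda>f. comp C r (comp C q f)) ` Hom C A B))"
    using q unfolding Bad_def by blast
  have "(\<lambda>f. comp C r (comp C q f)) ` Hom C A B = (\<lambda>f. comp C w f) ` Hom C A B"
    by (rule image_cong[OF refl]) (use cat_assoc[OF cat _ q r] rq in blast)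
  then show False using lt cw by simp
qed

lemma two_to_three:
  assumes cat: "is_category C" and fin: "finite (Hom C A B)"
    and RF: "\<forall>k\<ge>2. ramsey_arrow C F B A k t"
  shows "\<exists>lam. coloring C A B t lam \<and> essential C F A B lam"
proof (rule ccontr)
  assume no: "\<not> ?thesis"
  define S where "S = Hom C A B"
  define badK where "badK K \<longleftrightarrow> (\<exists>k\<ge>2. \<exists>chi. coloring C A F k chi \<and>
      (\<forall>w\<in>Hom C B F. \<not> K \<subseteq> kernel_on S (\<lambda>f. chi (comp C w f))))" for K
  define KK where "KK = {K \<in> Pow (S \<times> S). badK K}"
  have finKK: "finite KK" unfolding KK_def S_def using fin by auto
  define PP where "PP K p \<longleftrightarrow> fst p \<ge> 2 \<and> coloring C A F (fst p) (snd p) \<and>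
      (\<forall>w\<in>Hom C B F. \<not> K \<subseteq> kernel_on S (\<lambda>f. snd p (comp C w f)))" for K p
  have "\<forall>K\<in>KK. \<exists>p. PP K p"
  proof
    fix K assume "K \<in> KK"
    then obtain k chi where "k \<ge> 2" "coloring C A F k chi"
      "\<forall>w\<in>Hom C B F. \<not> K \<subseteq> kernel_on S (\<lambda>f. chi (comp C w f))"
      unfolding KK_def badK_def by blast
    then have "PP K (k, chi)" unfolding PP_def by simp
    then show "\<exists>p. PP K p" by blast
  qed
  then have "\<exists>pp. \<forall>K\<in>KK. PP K (pp K)" by (rule bchoice)
  then obtain pp where pp0: "\<forall>K\<in>KK. PP K (pp K)" by blast
  have pp: "fst (pp K) \<ge> 2 \<and> coloring C A F (fst (pp K)) (snd (pp K)) \<and>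
      (\<forall>w\<in>Hom C B F. \<not> K \<subseteq> kernel_on S (\<lambda>f. snd (pp K) (comp C w f)))" if "K \<in> KK" for K
    using pp0 that unfolding PP_def by blast
  define Phi where "Phi g = (\<lambda>K\<in>KK. snd (pp K) g)" for g
  define V where "V = Phi ` Hom C A F"
  have "V \<subseteq> PiE KK (\<lambda>K. {..<fst (pp K)})"
  proof
    fix v assume "v \<in> V"
    then obtain g where g: "g \<in> Hom C A F" "v = Phi g" unfolding V_def by blast
    have "snd (pp K) g < fst (pp K)" if "K \<in> KK" for K
    proof -
      have "coloring C A F (fst (pp K)) (snd (pp K))" using pp[OF that] by (rule conjunct1[OF conjunct2])
      then have "snd (pp K) ` Hom C A F \<subseteq> {..<fst (pp K)}" unfolding coloring_def .
      then show ?thesis using g(1) by blast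
    qed
    then show "v \<in> PiE KK (\<lambda>K. {..<fst (pp K)})" using g(2) unfolding Phi_def by auto
  qed
  moreover have "finite (PiE KK (\<lambda>K. {..<fst (pp K)}))" by (rule finite_PiE[OF finKK]) simp
  ultimately have finV: "finite V" by (rule finite_subset)
  obtain h n where hV: "h ` V = {i::nat. i < n}" and injh: "inj_on h V"
    using finite_imp_inj_to_nat_seg[OF finV] by blast
  define chi where "chi g = h (Phi g)" for g
  have colchi: "coloring C A F (max 2 n) chi"
  proof -
    have "chi g < max 2 n" if "g \<in> Hom C A F" for g
    proof -
      have "Phi g \<in> V" unfolding V_def using that by blast
      then have "h (Phi g) \<in> {i. i < n}" using hV by blast
      then show ?thesis unfolding chi_def by simp
    qed
    then show ?thesis unfolding coloring_def by auto
  qed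
  obtain w where w: "w \<in> Hom C B F" and cw: "card (chi ` ((\<lambda>f. comp C w f) ` S)) \<le> t"
  proof -
    have "ramsey_arrow C F B A (max 2 n) t" using RF by simp
    then show ?thesis using colchi that unfolding ramsey_arrow_def S_def by blast
  qed
  define W where "W = chi ` ((\<lambda>f. comp C w f) ` S)"
  have finW: "finite W" unfolding W_def S_def using fin by simp
  obtain h2 m where h2W: "h2 ` W = {i::nat. i < m}" and injh2: "inj_on h2 W"
    using finite_imp_inj_to_nat_seg[OF finW] by blast
  have "m = card W" using card_image[OF injh2] h2W by simp
  then have mt: "m \<le> t" using cw unfolding W_def by simp
  define lam where "lam f = h2 (chi (comp C w f))" for f
  have col: "coloring C A B t lam"
  proof -
    have "lam f < t" if "f \<in> Hom C A B" for f
    proof -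
      have "chi (comp C w f) \<in> W" unfolding W_def S_def using that by blast
      then have "lam f \<in> {i. i < m}" unfolding lam_def using h2W by blast
      then show ?thesis using mt by simp
    qed
    then show ?thesis unfolding coloring_def by auto
  qed
  have kereq: "kernel_on S lam = kernel_on S (\<lambda>f. chi (comp C w f))"
  proof -
    have "lam x = lam y \<longleftrightarrow> chi (comp C w x) = chi (comp C w y)" if "x \<in> S" "y \<in> S" for x y
    proof -
      have "chi (comp C w x) \<in> W" "chi (comp C w y) \<in> W" unfolding W_def using that by blast+
      then show ?thesis using injh2 unfolding lam_def inj_on_def by metis
    qed
    then show ?thesis unfolding kernel_on_def by auto
  qed
  have "\<not> essential C F A B lam" using no col by auto
  then obtain k chi' where "k \<ge> 2" "coloring C A F k chi'"
     "\<forall>w\<in>Hom C B F. \<not> kernel_on S lam \<subseteq> kernel_on S (\<lambda>f. chi' (comp C w f))"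
    unfolding essential_def S_def by blast
  then have "badK (kernel_on S lam)" unfolding badK_def by blast
  moreover have "kernel_on S lam \<in> Pow (S \<times> S)" unfolding kernel_on_def by auto
  ultimately have KKin: "kernel_on S lam \<in> KK" unfolding KK_def by simp
  have "kernel_on S lam \<subseteq> kernel_on S (\<lambda>f. snd (pp (kernel_on S lam)) (comp C w f))"
  proof
    fix z assume "z \<in> kernel_on S lam"
    then obtain x y where z: "z = (x,y)" "x \<in> S" "y \<in> S" "chi (comp C w x) = chi (comp C w y)"
      using kereq unfolding kernel_on_def by auto
    have wx: "comp C w x \<in> Hom C A F" and wy: "comp C w y \<in> Hom C A F"
      using cat_comp[OF cat _ w] z(2,3) unfolding S_def by auto
    have "Phi (comp C w x) = Phi (comp C w y)"
    proof -
      have "Phi (comp C w x) \<in> V" "Phi (comp C w y) \<in> V" unfolding V_def using wx wy by blast+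
      then show ?thesis using z(4) injh unfolding chi_def inj_on_def by simp
    qed
    then have "snd (pp (kernel_on S lam)) (comp C w x) = snd (pp (kernel_on S lam)) (comp C w y)"
    proof -
      have "\<And>g. Phi g (kernel_on S lam) = snd (pp (kernel_on S lam)) g"
        unfolding Phi_def using KKin by simp
      then show ?thesis using \<open>Phi (comp C w x) = Phi (comp C w y)\<close> by metis
    qed
    then show "z \<in> kernel_on S (\<lambda>f. snd (pp (kernel_on S lam)) (comp C w f))"
      using z unfolding kernel_on_def by auto
  qed
  then show False using pp[OF KKin] w by blast
qed


theorem lemma3p4:
  fixes C :: "('o, 'm) category" and Cfin AA :: "'o set" and F :: 'o
  assumes "is_category C"
    and "Cfin \<subseteq> Ob C"
    and "C_conditions C Cfin"
    and "AA \<subseteq> Cfin"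
    and "F \<in> Ob C"
    and "universal C AA F"
    and "locally_finite C AA F"
  shows "\<forall>t::nat. \<forall>A\<in>AA. t \<ge> 2 \<longrightarrow>
           ((small_ramsey_degree C AA A \<le> enat t
               \<longleftrightarrow> (\<forall>B\<in>AA. arr C A B \<longrightarrow> ramsey_arrow_fin C F B A t))
          \<and> ((\<forall>B\<in>AA. arr C A B \<longrightarrow> ramsey_arrow_fin C F B A t)
               \<longleftrightarrow> (\<forall>B\<in>AA. arr C A B \<longrightarrow>
                      (\<exists>lam. coloring C A B t lam \<and> essential C F A B lam))))"
proof (intro allI ballI impI)
  note cat = assms(1) and CfO = assms(2) and cc = assms(3) and AAC = assms(4)
    and Fo = assms(5) and univ = assms(6) and lf = assms(7)
  fix t :: nat and A assume A: "A \<in> AA" and t2: "t \<ge> 2"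
  have fin_hom: "\<forall>A\<in>Cfin. \<forall>B\<in>Cfin. finite (Hom C A B)"
    using cc unfolding C_conditions_def by blast
  define P where "P n \<longleftrightarrow> 0 < n \<and> (\<forall>k\<ge>2. \<forall>B\<in>AA. \<exists>X\<in>AA. ramsey_arrow C X B A k n)" for n
  have srd: "small_ramsey_degree C AA A = (if \<exists>n. P n then enat (LEAST n. P n) else \<infinity>)"
    unfolding small_ramsey_degree_def P_def Let_def by simp
  have h1: "small_ramsey_degree C AA A \<le> enat t \<Longrightarrow>
        (\<forall>B\<in>AA. arr C A B \<longrightarrow> ramsey_arrow_fin C F B A t)"
  proof -
    assume le: "small_ramsey_degree C AA A \<le> enat t"
    have ex: "\<exists>n. P n"
    proof (rule ccontr)
      assume "\<not> (\<exists>n. P n)"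
      then have "small_ramsey_degree C AA A = \<infinity>" using srd by simp
      then show False using le by simp
    qed
    define n0 where "n0 = (LEAST n. P n)"
    have Pn0: "P n0" unfolding n0_def by (rule LeastI_ex[OF ex])
    have n0t: "n0 \<le> t" using le srd ex unfolding n0_def by simp
    show "\<forall>B\<in>AA. arr C A B \<longrightarrow> ramsey_arrow_fin C F B A t"
    proof (intro ballI impI)
      fix B assume B: "B \<in> AA" and "arr C A B"
      show "ramsey_arrow_fin C F B A t" unfolding ramsey_arrow_fin_def
      proof (intro allI impI)
        fix k :: nat assume k: "k \<ge> 2"
        obtain X where X: "X \<in> AA" and RX: "ramsey_arrow C X B A k n0"
          using Pn0 k B unfolding P_def by blast
        obtain u where u: "u \<in> Hom C X F" using univ X unfolding universal_def arr_def by blast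
        have "ramsey_arrow C F B A k n0" by (rule transfer_arrow[OF cat RX u])
        then show "ramsey_arrow C F B A k t"
          using n0t unfolding ramsey_arrow_def by (meson order_trans)
      qed
    qed
  qed
  have h2: "small_ramsey_degree C AA A \<le> enat t"
    if R2: "\<forall>B\<in>AA. arr C A B \<longrightarrow> ramsey_arrow_fin C F B A t"
  proof -
    have Pt: "P t"
      unfolding P_def
    proof (intro conjI allI impI ballI)
      show "0 < t" using t2 by simp
    next
      fix k :: nat and B assume k: "k \<ge> 2" and B: "B \<in> AA"
      show "\<exists>X\<in>AA. ramsey_arrow C X B A k t"
      proof (cases "arr C A B")
        case True
        then have "ramsey_arrow C F B A k t" using R2 B k unfolding ramsey_arrow_fin_def by blast
        then show ?thesis by (rule compactness[OF cat CfO cc AAC Fo univ lf A B k])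
      next
        case False
        then have e: "Hom C A B = {}" unfolding arr_def by simp
        have "ident C B \<in> Hom C B B" using cat_id[OF cat] B AAC CfO by blast
        then have "ramsey_arrow C B B A k t" unfolding ramsey_arrow_def e by auto
        then show ?thesis using B by blast
      qed
    qed
    then have ex: "\<exists>n. P n" by blast
    have "(LEAST n. P n) \<le> t" using Pt by (rule Least_le)
    then show ?thesis using srd ex by simp
  qed
  have h3: "(\<forall>B\<in>AA. arr C A B \<longrightarrow> ramsey_arrow_fin C F B A t) \<Longrightarrow>
        (\<forall>B\<in>AA. arr C A B \<longrightarrow> (\<exists>lam. coloring C A B t lam \<and> essential C F A B lam))"
  proof (intro ballI impI)
    fix B assume R2: "\<forall>B\<in>AA. arr C A B \<longrightarrow> ramsey_arrow_fin C F B A t"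
      and B: "B \<in> AA" and AB: "arr C A B"
    have fin: "finite (Hom C A B)" using fin_hom A B AAC by blast
    have "\<forall>k\<ge>2. ramsey_arrow C F B A k t" using R2 B AB unfolding ramsey_arrow_fin_def by blast
    then show "\<exists>lam. coloring C A B t lam \<and> essential C F A B lam"
      by (rule two_to_three[OF cat fin])
  qed
  have h4: "(\<forall>B\<in>AA. arr C A B \<longrightarrow> (\<exists>lam. coloring C A B t lam \<and> essential C F A B lam)) \<Longrightarrow>
        (\<forall>B\<in>AA. arr C A B \<longrightarrow> ramsey_arrow_fin C F B A t)"
  proof (intro ballI impI)
    fix B assume R3: "\<forall>B\<in>AA. arr C A B \<longrightarrow> (\<exists>lam. coloring C A B t lam \<and> essential C F A B lam)"
      and B: "B \<in> AA" and AB: "arr C A B"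
    have fin: "finite (Hom C A B)" using fin_hom A B AAC by blast
    obtain lam where col: "coloring C A B t lam" and ess: "essential C F A B lam"
      using R3 B AB by blast
    show "ramsey_arrow_fin C F B A t" unfolding ramsey_arrow_fin_def
      using three_to_two[OF ess col fin] by blast
  qed
  show "(small_ramsey_degree C AA A \<le> enat t
               \<longleftrightarrow> (\<forall>B\<in>AA. arr C A B \<longrightarrow> ramsey_arrow_fin C F B A t))
          \<and> ((\<forall>B\<in>AA. arr C A B \<longrightarrow> ramsey_arrow_fin C F B A t)
               \<longleftrightarrow> (\<forall>B\<in>AA. arr C A B \<longrightarrow>
                      (\<exists>lam. coloring C A B t lam \<and> essential C F A B lam)))"
    using h1 h2 h3 h4 by blast
qed

end
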